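(* Let $c>1$ be an irrational number, let $q=[c]$ (so $q=c-\{c\}$), and let $d=\{c\}^{-1}$. For a positive integer $n$ let $c'_n=[c^{-1}n]$, and define $$f(n)=[c^{-1}(n+1)]-[c^{-1}n],\qquad g(n)=[\{c\}(n+1)]-[\{c\}n].$$ Let $k$ be a nonnegative integer. For a positive integer $m$ put $x=[mc]$. Then, as $m\to\infty$, \begin{align*} \sum_{n=1}^x \frac{q f(n)+f(n)g([ \frac {n}{c}]+k+1)}{n} =\;& 1+ \log m +\log c+ \gamma +\left\{\{c\}(k+1)\right\} \\ &- \sum_{n=1}^\infty \frac{c\{ c^{-1} (n+1)\}+\{ \{c\}(c'_{n+1}+k+1)\}}{n(n+1)}+O\left(\frac{1}{m}\right), \end{align*} where $\gamma$ is Euler's constant.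
   Context: $[x]$ is the greatest integer not exceeding $x$ and $\{x\}=x-[x]$. The function $f$ is the indicator function of the set $\{[cj]: j\ge 1\}$, and $g$ is the indicator function of $\{[dj]: j\ge1\}$. The implied constant in $O(1/m)$ may depend on $c$ and $k$. *)

theory Defs
  imports "HOL-Analysis.Analysis" "HOL-Library.Landau_Symbols"
begin

definition ff :: "real \<Rightarrow> int \<Rightarrow> int" where
  "ff c n = \<lfloor>(of_int n + 1) / c\<rfloor> - \<lfloor>of_int n / c\<rfloor>"

definition gg :: "real \<Rightarrow> int \<Rightarrow> int" where
  "gg c n = \<lfloor>frac c * (of_int n + 1)\<rfloor> - \<lfloor>frac c * of_int n\<rfloor>"

definition cprime :: "real \<Rightarrow> int \<Rightarrow> int" where
  "cprime c n = \<lfloor>of_int n / c\<rfloor>"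

end

theory Submission
  imports Defs "HOL-Real_Asymp.Real_Asymp"
begin




lemma floor_c_int_real:
  fixes c :: real and i :: int
  shows "real_of_int \<lfloor>c * of_int i\<rfloor> = c * of_int i - frac (frac c * of_int i)"
proof -
  have e: "c * of_int i = of_int (\<lfloor>c\<rfloor> * i) + frac c * of_int i"
    by (simp add: frac_def algebra_simps)
  have "\<lfloor>c * of_int i\<rfloor> = \<lfloor>c\<rfloor> * i + \<lfloor>frac c * of_int i\<rfloor>"
    by (subst e) (metis add.commute floor_add_int)
  hence "real_of_int \<lfloor>c * of_int i\<rfloor> = of_int (\<lfloor>c\<rfloor> * i) + real_of_int \<lfloor>frac c * of_int i\<rfloor>" by simp
  also have "\<dots> = c * of_int i - frac (frac c * of_int i)"
    using e by (simp add: frac_def)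
  finally show ?thesis .
qed

lemma floor_c_int:
  fixes c :: real and i :: int
  shows "\<lfloor>c * of_int i\<rfloor> = \<lfloor>c\<rfloor> * i + \<lfloor>frac c * of_int i\<rfloor>"
proof -
  have e: "c * of_int i = of_int (\<lfloor>c\<rfloor> * i) + frac c * of_int i"
    by (simp add: frac_def algebra_simps)
  show ?thesis by (subst e) (metis add.commute floor_add_int)
qed

definition FF :: "real \<Rightarrow> nat \<Rightarrow> nat \<Rightarrow> real" where
  "FF c k n = of_int \<lfloor>c\<rfloor> * of_int (ff c (int n))
            + of_int (ff c (int n)) * of_int (gg c (\<lfloor>real n / c\<rfloor> + int k + 1))"

definition TT :: "real \<Rightarrow> nat \<Rightarrow> nat \<Rightarrow> int" where
  "TT c k n = \<lfloor>c * of_int (\<lfloor>(real n + 1) / c\<rfloor> + int k + 1)\<rfloor> - \<lfloor>c * of_int (int k + 1)\<rfloor>"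

definition psi :: "real \<Rightarrow> nat \<Rightarrow> nat \<Rightarrow> real" where
  "psi c k n = c * frac ((real n + 1) / c)
      + frac (frac c * (of_int (cprime c (int n + 1)) + real k + 1))"

definition SS :: "real \<Rightarrow> nat \<Rightarrow> nat \<Rightarrow> real" where
  "SS c k n = real n + 1 + frac (frac c * (real k + 1)) - psi c k n"

lemma TT0: assumes "c > 1" shows "TT c k 0 = 0"
proof -
  have "\<lfloor>1 / c\<rfloor> = 0" using assms by (simp add: floor_eq_iff)
  thus ?thesis by (simp add: TT_def)
qed

lemma TT_real: assumes "c > 1" shows "real_of_int (TT c k n) = SS c k n"
proof -
  define J where "J = \<lfloor>(real n + 1) / c\<rfloor>"
  have cJ: "c * of_int J = real n + 1 - c * frac ((real n + 1) / c)"
    using assms by (simp add: J_def frac_def field_simps)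
  have cp: "cprime c (int n + 1) = J" by (simp add: cprime_def J_def add.commute)
  have "real_of_int (TT c k n) = c * of_int (J + int k + 1) - frac (frac c * of_int (J + int k + 1))
        - (c * of_int (int k + 1) - frac (frac c * of_int (int k + 1)))"
    unfolding TT_def J_def[symmetric] by (simp only: of_int_diff floor_c_int_real)
  also have "\<dots> = SS c k n"
    unfolding SS_def psi_def cp using cJ by (simp add: algebra_simps)
  finally show ?thesis .
qed

lemma TT_step: assumes "c > 1"
  shows "real_of_int (TT c k (Suc n)) - real_of_int (TT c k n) = FF c k (Suc n)"
proof -
  define J where "J = \<lfloor>real (Suc n) / c\<rfloor>"
  define J' where "J' = \<lfloor>(real (Suc n) + 1) / c\<rfloor>"
  have f: "ff c (int (Suc n)) = J' - J" by (simp add: ff_def J_def J'_def)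
  have TJ: "TT c k n = \<lfloor>c * of_int (J + int k + 1)\<rfloor> - \<lfloor>c * of_int (int k + 1)\<rfloor>"
    by (simp add: TT_def J_def add.commute)
  have TJ': "TT c k (Suc n) = \<lfloor>c * of_int (J' + int k + 1)\<rfloor> - \<lfloor>c * of_int (int k + 1)\<rfloor>"
    by (simp add: TT_def J'_def)
  have m1: "J \<le> J'" unfolding J_def J'_def using assms
    by (intro floor_mono divide_right_mono) auto
  have "(real (Suc n) + 1) / c \<le> real (Suc n) / c + 1" using assms by (simp add: field_simps)
  hence "J' \<le> \<lfloor>real (Suc n) / c + 1\<rfloor>" unfolding J'_def by (rule floor_mono)
  hence m2: "J' \<le> J + 1" by (simp add: J_def)
  show ?thesis
  proof (cases "J' = J")
    case True thus ?thesis unfolding FF_def f TJ TJ' by simp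
  next
    case False
    hence JJ: "J' = J + 1" using m1 m2 by simp
    have g: "gg c (\<lfloor>real (Suc n) / c\<rfloor> + int k + 1) =
       \<lfloor>frac c * of_int (J + int k + 2)\<rfloor> - \<lfloor>frac c * of_int (J + int k + 1)\<rfloor>"
    proof -
      have e2: "of_int (J + int k + 1) + 1 = (of_int (J + int k + 2)::real)" by simp
      show ?thesis unfolding gg_def J_def[symmetric] e2 by (rule refl)
    qed
    have h: "TT c k (Suc n) - TT c k n = \<lfloor>c\<rfloor> + (\<lfloor>frac c * of_int (J + int k + 2)\<rfloor> - \<lfloor>frac c * of_int (J + int k + 1)\<rfloor>)"
      unfolding TJ TJ' JJ floor_c_int[of c] by (simp add: algebra_simps)
    have "real_of_int (TT c k (Suc n)) - real_of_int (TT c k n) = real_of_int (TT c k (Suc n) - TT c k n)" by simp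
    also have "\<dots> = real_of_int (\<lfloor>c\<rfloor> + (\<lfloor>frac c * of_int (J + int k + 2)\<rfloor> - \<lfloor>frac c * of_int (J + int k + 1)\<rfloor>))"
      unfolding h ..
    also have "\<dots> = FF c k (Suc n)" unfolding FF_def f JJ g by simp
    finally show ?thesis .
  qed
qed

lemma abel:
  fixes F S :: "nat \<Rightarrow> real"
  assumes "S 0 = 0" "\<And>n. F (Suc n) = S (Suc n) - S n"
  shows "(\<Sum>n=1..x. F n / real n) = S x / real x + (\<Sum>n=1..<x. S n / (real n * (real n + 1)))"
proof (induction x)
  case 0 thus ?case by simp
next
  case (Suc x)
  show ?case
  proof (cases "x = 0")
    case True thus ?thesis using assms by simp
  next
    case False
    have "(\<Sum>n=1..Suc x. F n / real n) = (\<Sum>n=1..x. F n / real n) + F (Suc x) / real (Suc x)" by simp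
    also have "\<dots> = S x / real x + (\<Sum>n=1..<x. S n / (real n * (real n + 1))) + (S (Suc x) - S x) / real (Suc x)"
      using Suc.IH assms(2) by simp
    also have "\<dots> = S (Suc x) / real (Suc x) + ((\<Sum>n=1..<x. S n / (real n * (real n + 1))) + S x / (real x * (real x + 1)))"
    proof -
      have h: "S x / real x - S x / (real x + 1) = S x / (real x * (real x + 1))"
        using False by (simp add: field_simps)
      have h2: "(S (Suc x) - S x) / real (Suc x) = S (Suc x) / real (Suc x) - S x / (real x + 1)"
        by (simp add: diff_divide_distrib)
      show ?thesis using h h2 by simp
    qed
    also have "\<dots> = S (Suc x) / real (Suc x) + (\<Sum>n=1..<Suc x. S n / (real n * (real n + 1)))"
      using False by simp
    finally show ?thesis .
  qed
qed


lemma tail_bound: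
  fixes a :: "nat \<Rightarrow> real" and B :: real
  assumes nn: "\<And>i. 0 \<le> a i" and le: "\<And>i. a i \<le> B / ((real i + 1) * (real i + 2))"
  shows "summable a" "0 \<le> suminf a - (\<Sum>i<N. a i)" "suminf a - (\<Sum>i<N. a i) \<le> B / (real N + 1)"
proof -
  have tel: "(\<lambda>i. B / ((real (i + M) + 1) * (real (i + M) + 2))) sums (B / (real M + 1))" for M
  proof -
    have lim: "(\<lambda>i. B / (real (i + M) + 1)) \<longlonglongrightarrow> 0"
      by real_asymp
    have "(\<lambda>i. B / (real (i + M) + 1) - B / (real (Suc i + M) + 1)) sums (B / (real (0 + M) + 1) - 0)"
      by (rule telescope_sums'[OF lim])
    moreover have "B / (real (i + M) + 1) - B / (real (Suc i + M) + 1) = B / ((real (i + M) + 1) * (real (i + M) + 2))" for i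
      by (simp add: field_simps)
    ultimately show ?thesis by simp
  qed
  have s0: "summable (\<lambda>i. B / ((real i + 1) * (real i + 2)))"
    using sums_summable[OF tel[of 0]] by simp
  show sa: "summable a"
    by (rule summable_comparison_test'[OF s0]) (use nn le in auto)
  have split: "suminf a - (\<Sum>i<N. a i) = (\<Sum>i. a (i + N))"
    using suminf_split_initial_segment[OF sa, of N] by simp
  have sN: "summable (\<lambda>i. a (i + N))" using sa by (simp add: summable_iff_shift)
  show "0 \<le> suminf a - (\<Sum>i<N. a i)" unfolding split
    using nn by (intro suminf_nonneg sN) auto
  show "suminf a - (\<Sum>i<N. a i) \<le> B / (real N + 1)" unfolding split
  proof (rule sums_le[OF _ summable_sums[OF sN] tel[of N]])
    fix i show "a (i + N) \<le> B / ((real (i + N) + 1) * (real (i + N) + 2))" by (rule le)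
  qed
qed

lemma sum_tel1: "(\<Sum>n=1..<Suc N. 1 / (real n * (real n + 1))) = 1 - 1 / (real N + 1)"
proof (induction N)
  case 0 thus ?case by simp
next
  case (Suc N)
  have "(\<Sum>n=1..<Suc (Suc N). 1 / (real n * (real n + 1))) = (\<Sum>n=1..<Suc N. 1 / (real n * (real n + 1))) + 1 / (real (Suc N) * (real (Suc N) + 1))"
    by simp
  also have "\<dots> = 1 - 1 / (real N + 1) + 1 / ((real N + 1) * (real N + 2))" unfolding Suc.IH by (simp add: algebra_simps)
  also have "\<dots> = 1 - 1 / (real (Suc N) + 1)"
  proof -
    have aux: "1 / y - 1 / (y * (y + 1)) = 1 / (y + 1)" if "y > 0" for y :: real
    proof -
      have "y + y * y > 0" using that by (simp add: add_pos_pos)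
      hence "y \<noteq> 0" "y + 1 \<noteq> 0" "y + y * y \<noteq> 0" "y * (y + 1) \<noteq> 0" using that by (simp_all add: algebra_simps)
      thus ?thesis by (simp add: field_simps)
    qed
    have "1 / (real N + 1) - 1 / ((real N + 1) * (real N + 2)) = 1 / (real N + 2)"
      using aux[of "real N + 1"] by (simp add: add.assoc)
    moreover have e: "real (Suc N) + 1 = real N + 2" by simp
    ultimately show ?thesis unfolding e by linarith
  qed
  finally show ?case .
qed

lemma sum_shift1: "(\<Sum>n=1..<Suc N. f n) = (\<Sum>i<N. f (Suc i))"
  by (induction N) auto

lemma harm_eq: "(\<Sum>n=1..<Suc N. 1 / real n) = harm N"
  by (simp add: harm_def atLeastLessThanSuc_atLeastAtMost inverse_eq_divide)

lemma psi_bounds: assumes "c > 1" shows "0 \<le> psi c k n" "psi c k n \<le> c + 1"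
proof -
  have a1: "0 \<le> frac ((real n + 1) / c)" "frac ((real n + 1) / c) < 1" by (auto simp: frac_lt_1)
  have a2: "0 \<le> frac (frac c * (of_int (cprime c (int n + 1)) + real k + 1))"
     "frac (frac c * (of_int (cprime c (int n + 1)) + real k + 1)) < 1" by (auto simp: frac_lt_1)
  have a3: "c * frac ((real n + 1) / c) \<le> c * 1"
    using assms a1 by (intro mult_left_mono) auto
  have a4: "0 \<le> c * frac ((real n + 1) / c)" using assms a1 by simp
  show "0 \<le> psi c k n" unfolding psi_def using a2 a4 by linarith
  show "psi c k n \<le> c + 1" unfolding psi_def using a2 a3 by linarith
qed


lemma main_bound:
  fixes c :: real and k m :: nat
  assumes c: "c > 1" and m: "m \<ge> 2"
  defines "x \<equiv> nat \<lfloor>real m * c\<rfloor>"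
      and "a \<equiv> (\<lambda>n. psi c k (Suc n) / (real (Suc n) * (real (Suc n) + 1)))"
      and "\<phi> \<equiv> frac (frac c * (real k + 1))"
  shows "\<bar>(\<Sum>n=1..x. FF c k n / real n) - (1 + ln (real m) + ln c + euler_mascheroni + \<phi> - suminf a)\<bar>
          \<le> (2 * c + 6) / real m"
proof -
  have mpos: "real m > 0" using m by simp
  have fl0: "\<lfloor>real m * c\<rfloor> \<ge> 0" using c by simp
  have xr: "real x = of_int \<lfloor>real m * c\<rfloor>" unfolding x_def using fl0 by simp
  have x1: "real x \<le> real m * c" unfolding xr by simp
  have x2: "real x > real m * c - 1" unfolding xr by linarith
  have "real m \<le> real m * c" using c mpos by simp
  hence "of_int (int m) \<le> real m * c" by simp
  hence "int m \<le> \<lfloor>real m * c\<rfloor>" by (simp only: le_floor_iff)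
  hence xm: "m \<le> x" unfolding x_def by linarith
  hence xmr: "real m \<le> real x" by simp
  have xpos: "real x > 0" using xmr mpos by linarith
  obtain N where N: "x = Suc N" using xm m by (cases x) auto
  have N1: "N \<ge> 1" using N xm m by simp
  have N2: "2 * real N \<ge> real m" using N xm m by simp
  have xN: "real x = real N + 1" using N by simp
  have ab: "(\<Sum>n=1..x. FF c k n / real n) = SS c k x / real x + (\<Sum>n=1..<x. SS c k n / (real n * (real n + 1)))"
  proof (rule abel)
    show "SS c k 0 = 0" using TT_real[OF c, of k 0] TT0[OF c, of k] by simp
    fix n show "FF c k (Suc n) = SS c k (Suc n) - SS c k n"
      using TT_step[OF c, of k n] TT_real[OF c, of k n] TT_real[OF c, of k "Suc n"] by simp
  qed
  have terms: "SS c k n / (real n * (real n + 1)) =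
      1 / real n + \<phi> * (1 / (real n * (real n + 1))) - psi c k n / (real n * (real n + 1))"
    if "n \<in> {1..<x}" for n
  proof -
    have p: "real n \<noteq> 0" "real n + 1 \<noteq> 0" "real n * (real n + 1) \<noteq> 0" using that by simp_all
    have "SS c k n / (real n * (real n + 1)) = (real n + 1) / (real n * (real n + 1)) + \<phi> * (1 / (real n * (real n + 1))) - psi c k n / (real n * (real n + 1))"
      unfolding SS_def \<phi>_def by (simp add: diff_divide_distrib add_divide_distrib)
    moreover have "(real n + 1) / (real n * (real n + 1)) = 1 / real n" using p by simp
    ultimately show ?thesis by simp
  qed
  have sm: "(\<Sum>n=1..<x. SS c k n / (real n * (real n + 1))) = harm N + \<phi> * (1 - 1 / (real N + 1)) - (\<Sum>i<N. a i)"
  proof -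
    have "(\<Sum>n=1..<x. SS c k n / (real n * (real n + 1))) =
        (\<Sum>n=1..<x. 1 / real n + \<phi> * (1 / (real n * (real n + 1))) - psi c k n / (real n * (real n + 1)))"
      by (rule sum.cong[OF refl terms])
    also have "\<dots> = (\<Sum>n=1..<x. 1 / real n) + \<phi> * (\<Sum>n=1..<x. 1 / (real n * (real n + 1)))
        - (\<Sum>n=1..<x. psi c k n / (real n * (real n + 1)))"
      by (simp add: sum_subtractf sum.distrib sum_distrib_left)
    also have "\<dots> = harm N + \<phi> * (1 - 1 / (real N + 1)) - (\<Sum>i<N. a i)"
      unfolding N harm_eq sum_tel1 sum_shift1 a_def ..
    finally show ?thesis .
  qed
  have ale: "a i \<le> (c + 1) / ((real i + 1) * (real i + 2))" for i
  proof -
    have "psi c k (Suc i) \<le> c + 1" by (rule psi_bounds[OF c])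
    hence "psi c k (Suc i) / ((real i + 1) * (real i + 2)) \<le> (c + 1) / ((real i + 1) * (real i + 2))"
      by (intro divide_right_mono) auto
    thus ?thesis unfolding a_def by (simp add: add_ac)
  qed
  have ann: "0 \<le> a i" for i unfolding a_def using psi_bounds[OF c] by simp
  have t1: "0 \<le> suminf a - (\<Sum>i<N. a i)" and t2: "suminf a - (\<Sum>i<N. a i) \<le> (c + 1) / (real N + 1)"
    using tail_bound[of a "c + 1", OF ann ale] by auto
  have eb: "euler_mascheroni \<in> {harm N - ln (real (Suc N)) + inverse (real (2*(N+1)))..harm N - ln (real (Suc N)) + inverse (real (2*N))}"
    using euler_mascheroni_bounds[OF N1] by simp
  have h1: "0 \<le> inverse (real (2*(N+1)))" by simp
  have h2: "inverse (real (2*N)) \<le> 1 / real m"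
    using N2 mpos by (simp add: inverse_eq_divide field_simps)
  have e1: "harm N - ln (real (Suc N)) + inverse (real (2*(N+1))) \<le> euler_mascheroni"
   and e2: "euler_mascheroni \<le> harm N - ln (real (Suc N)) + inverse (real (2*N))"
    using eb by (simp_all only: atLeastAtMost_iff)
  have lx: "ln (real x) = ln (real (Suc N))" using N by simp
  have H1: "harm N - ln (real x) - euler_mascheroni \<le> 0" and H2: "-(1 / real m) \<le> harm N - ln (real x) - euler_mascheroni"
    unfolding lx using e1 e2 h1 h2 by linarith+
  have lnmc: "ln (real m) + ln c = ln (real m * c)" using mpos c by (simp add: ln_mult)
  have L1: "0 \<le> ln (real m * c) - ln (real x)" using x1 xpos by simp
  have "ln (real m * c / real x) \<le> real m * c / real x - 1" using xpos mpos c by (intro ln_le_minus_one) simp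
  also have "\<dots> = (real m * c - real x) / real x" using xpos by (simp add: field_simps)
  also have "\<dots> \<le> 1 / real x" using x2 xpos by (intro divide_right_mono) auto
  also have "\<dots> \<le> 1 / real m" using xmr mpos by (simp add: frac_le)
  finally have L2: "ln (real m * c) - ln (real x) \<le> 1 / real m" using xpos mpos c by (simp add: ln_div)
  have phib: "0 \<le> \<phi>" "\<phi> < 1" unfolding \<phi>_def by (auto simp: frac_lt_1)
  have psix: "0 \<le> psi c k x" "psi c k x \<le> c + 1" using psi_bounds[OF c] by auto
  have S1: "SS c k x / real x - 1 = (1 + \<phi> - psi c k x) / real x"
    unfolding SS_def \<phi>_def using xpos by (simp add: field_simps)
  have "\<bar>1 + \<phi> - psi c k x\<bar> \<le> c + 2" using phib psix c by (auto simp: abs_le_iff)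
  hence "\<bar>1 + \<phi> - psi c k x\<bar> / real x \<le> (c + 2) / real x" using xpos by (simp add: divide_right_mono)
  also have "\<dots> \<le> (c + 2) / real m" using xmr mpos c by (intro divide_left_mono) auto
  finally have S2: "\<bar>SS c k x / real x - 1\<bar> \<le> (c + 2) / real m" unfolding S1 by simp
  have P1: "0 \<le> \<phi> / real x" using phib xpos by simp
  have "\<phi> / real x \<le> 1 / real x" using phib xpos by (intro divide_right_mono) auto
  also have "1 / real x \<le> 1 / real m" using xmr mpos by (simp add: frac_le)
  finally have P: "0 \<le> \<phi> / real x" "\<phi> / real x \<le> 1 / real m" using P1 by auto
  have T: "(c + 1) / (real N + 1) \<le> (c + 1) / real m"
    using xN xmr mpos c by (intro divide_left_mono) auto
  have eq: "(\<Sum>n=1..x. FF c k n / real n) - (1 + ln (real m) + ln c + euler_mascheroni + \<phi> - suminf a)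
      = (SS c k x / real x - 1) + (harm N - ln (real x) - euler_mascheroni) - (ln (real m * c) - ln (real x))
        - \<phi> / real x + (suminf a - (\<Sum>i<N. a i))"
    unfolding ab sm lnmc[symmetric] using xN by (simp add: algebra_simps)
  have split: "(2 * c + 6) / real m = (c + 2) / real m + 1 / real m + 1 / real m + 1 / real m + (c + 1) / real m"
    using mpos by (simp add: field_simps)
  have S3: "SS c k x / real x - 1 \<le> (c + 2) / real m" "- (SS c k x / real x - 1) \<le> (c + 2) / real m"
    using S2 unfolding abs_le_iff by blast+
  show ?thesis unfolding eq abs_le_iff split
    apply (rule conjI)
    using S3 H1 H2 L1 L2 P t1 t2 T by linarith+
qed


theorem theorem2:
  fixes c :: real and k :: nat
  assumes "c > 1" and "c \<notin> \<rat>"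
  shows "(\<lambda>m::nat.
      (\<Sum>n = 1..nat \<lfloor>real m * c\<rfloor>.
          (of_int \<lfloor>c\<rfloor> * of_int (ff c (int n))
            + of_int (ff c (int n)) * of_int (gg c (\<lfloor>real n / c\<rfloor> + int k + 1))) / real n)
      - (1 + ln (real m) + ln c + euler_mascheroni + frac (frac c * (real k + 1))
         - (\<Sum>n. (c * frac ((real (Suc n) + 1) / c)
                    + frac (frac c * (of_int (cprime c (int (Suc n) + 1)) + real k + 1)))
                  / (real (Suc n) * (real (Suc n) + 1)))))
    \<in> O(\<lambda>m. 1 / real m)"
  unfolding FF_def[symmetric] psi_def[symmetric]
proof (rule bigoI[where c = "2 * c + 6"])
  show "\<forall>\<^sub>F m in at_top. norm ((\<Sum>n = 1..nat \<lfloor>real m * c\<rfloor>. FF c k n / real n)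
      - (1 + ln (real m) + ln c + euler_mascheroni + frac (frac c * (real k + 1))
         - (\<Sum>n. psi c k (Suc n) / (real (Suc n) * (real (Suc n) + 1)))))
     \<le> (2 * c + 6) * norm (1 / real m)"
    unfolding eventually_at_top_linorder
  proof (intro exI[of _ 2] allI impI)
    fix m :: nat assume m: "2 \<le> m"
    have e: "(2 * c + 6) * \<bar>1 / real m\<bar> = (2 * c + 6) / real m" using m by simp
    show "norm ((\<Sum>n = 1..nat \<lfloor>real m * c\<rfloor>. FF c k n / real n)
      - (1 + ln (real m) + ln c + euler_mascheroni + frac (frac c * (real k + 1))
         - (\<Sum>n. psi c k (Suc n) / (real (Suc n) * (real (Suc n) + 1)))))
     \<le> (2 * c + 6) * norm (1 / real m)"
      unfolding real_norm_def e by (rule main_bound[OF assms(1) m])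
  qed
qed

end
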